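(* Let $T$ be any shortest-path tree of $G$ rooted at $s$, let $R$ be the forest obtained from $T$ by deleting the edges in $E(T)\cap E(D)$ (so $V(R)=V$), and let $\widetilde{E}$ be the set of edges $\{x,y\}\in E\setminus(E(T)\cup E(D))$ such that $x$ and $y$ lie in different connected components (subtrees) of $R$. Then an optimal outward path contains an edge of $\widetilde{E}$.
   Context: $G=(V,E,w)$ is a simple, connected, undirected graph with positive edge lengths, $s,t\in V$. A path is always simple; an $st$-path is a simple path from $s$ to $t$, and its length is the sum of its edge lengths. $D$ is the subgraph formed by the union of all shortest $st$-paths of $G$. An optimal outward path is an $st$-path of minimum length among all $st$-paths containing at least one edge of $E\setminus E(D)$. *)

theory Defs
  imports Complex_Main
begin

definition simple_graph :: "'a set \<Rightarrow> 'a set set \<Rightarrow> bool" where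
  "simple_graph V E \<longleftrightarrow> finite V \<and>
     (\<forall>e\<in>E. \<exists>x y. x \<noteq> y \<and> x \<in> V \<and> y \<in> V \<and> e = {x, y})"

definition is_path :: "'a set \<Rightarrow> 'a set set \<Rightarrow> 'a list \<Rightarrow> bool" where
  "is_path V F p \<longleftrightarrow> p \<noteq> [] \<and> distinct p \<and> set p \<subseteq> V \<and>
     (\<forall>i. Suc i < length p \<longrightarrow> {p ! i, p ! Suc i} \<in> F)"

definition path_between :: "'a set \<Rightarrow> 'a set set \<Rightarrow> 'a \<Rightarrow> 'a \<Rightarrow> 'a list \<Rightarrow> bool" where
  "path_between V F u v p \<longleftrightarrow> is_path V F p \<and> hd p = u \<and> last p = v"

definition path_edge_list :: "'a list \<Rightarrow> 'a set list" where
  "path_edge_list p = map (\<lambda>i. {p ! i, p ! Suc i}) [0..<length p - 1]"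

definition path_edges :: "'a list \<Rightarrow> 'a set set" where
  "path_edges p = set (path_edge_list p)"

definition path_len :: "('a set \<Rightarrow> real) \<Rightarrow> 'a list \<Rightarrow> real" where
  "path_len w p = sum_list (map w (path_edge_list p))"

definition connected_graph :: "'a set \<Rightarrow> 'a set set \<Rightarrow> bool" where
  "connected_graph V F \<longleftrightarrow> (\<forall>u\<in>V. \<forall>v\<in>V. \<exists>p. path_between V F u v p)"

definition shortest_path :: "'a set \<Rightarrow> 'a set set \<Rightarrow> ('a set \<Rightarrow> real) \<Rightarrow> 'a \<Rightarrow> 'a \<Rightarrow> 'a list \<Rightarrow> bool" where
  "shortest_path V E w u v p \<longleftrightarrow> path_between V E u v p \<and>
     (\<forall>q. path_between V E u v q \<longrightarrow> path_len w p \<le> path_len w q)"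

definition D_edges :: "'a set \<Rightarrow> 'a set set \<Rightarrow> ('a set \<Rightarrow> real) \<Rightarrow> 'a \<Rightarrow> 'a \<Rightarrow> 'a set set" where
  "D_edges V E w s t = (\<Union>{path_edges p |p. shortest_path V E w s t p})"

definition spanning_tree :: "'a set \<Rightarrow> 'a set set \<Rightarrow> 'a set set \<Rightarrow> bool" where
  "spanning_tree V E T \<longleftrightarrow> T \<subseteq> E \<and>
     (\<forall>u\<in>V. \<forall>v\<in>V. \<exists>!p. path_between V T u v p)"

definition shortest_path_tree :: "'a set \<Rightarrow> 'a set set \<Rightarrow> ('a set \<Rightarrow> real) \<Rightarrow> 'a \<Rightarrow> 'a set set \<Rightarrow> bool" where
  "shortest_path_tree V E w s T \<longleftrightarrow> s \<in> V \<and> spanning_tree V E T \<and>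
     (\<forall>v\<in>V. \<forall>p. path_between V T s v p \<longrightarrow> shortest_path V E w s v p)"

definition outward_path :: "'a set \<Rightarrow> 'a set set \<Rightarrow> ('a set \<Rightarrow> real) \<Rightarrow> 'a \<Rightarrow> 'a \<Rightarrow> 'a list \<Rightarrow> bool" where
  "outward_path V E w s t p \<longleftrightarrow> path_between V E s t p \<and>
     path_edges p \<inter> (E - D_edges V E w s t) \<noteq> {}"

definition optimal_outward_path :: "'a set \<Rightarrow> 'a set set \<Rightarrow> ('a set \<Rightarrow> real) \<Rightarrow> 'a \<Rightarrow> 'a \<Rightarrow> 'a list \<Rightarrow> bool" where
  "optimal_outward_path V E w s t p \<longleftrightarrow> outward_path V E w s t p \<and>
     (\<forall>q. outward_path V E w s t q \<longrightarrow> path_len w p \<le> path_len w q)"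

text \<open>The forest R = (V, T - E(D)); x and y are in the same component iff joined by a path.\<close>
definition forest_R :: "'a set \<Rightarrow> 'a set set \<Rightarrow> ('a set \<Rightarrow> real) \<Rightarrow> 'a \<Rightarrow> 'a \<Rightarrow> 'a set set \<Rightarrow> 'a set set" where
  "forest_R V E w s t T = T - (T \<inter> D_edges V E w s t)"

definition E_tilde :: "'a set \<Rightarrow> 'a set set \<Rightarrow> ('a set \<Rightarrow> real) \<Rightarrow> 'a \<Rightarrow> 'a \<Rightarrow> 'a set set \<Rightarrow> 'a set set" where
  "E_tilde V E w s t T = {e \<in> E - (T \<union> D_edges V E w s t).
     \<exists>x y. e = {x, y} \<and> \<not> (\<exists>p. path_between V (forest_R V E w s t T) x y p)}"

end

theory Submission
  imports Defs
begin


lemma pel_Nil[simp]: "path_edge_list [] = []"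
  by (simp add: path_edge_list_def)
lemma pel_single[simp]: "path_edge_list [a] = []"
  by (simp add: path_edge_list_def)
lemma pel_Cons2[simp]: "path_edge_list (a # b # xs) = {a, b} # path_edge_list (b # xs)"
  unfolding path_edge_list_def
  by (simp add: upt_conv_Cons map_Suc_upt[symmetric] del: upt_Suc)

lemma pel_append: "path_edge_list (xs @ y # ys) = path_edge_list (xs @ [y]) @ path_edge_list (y # ys)"
proof (induction xs)
  case Nil then show ?case by simp
next
  case (Cons a xs) then show ?case
  proof (cases xs)
    case Nil then show ?thesis by simp
  next
    case (Cons b zs)
    then show ?thesis using Cons.IH by (simp only: append_Cons pel_Cons2)
  qed
qed

lemma pe_append: "path_edges (xs @ y # ys) = path_edges (xs @ [y]) \<union> path_edges (y # ys)"
  unfolding path_edges_def by (subst pel_append) simp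

lemma pl_append: "path_len w (xs @ y # ys) = path_len w (xs @ [y]) + path_len w (y # ys)"
  unfolding path_len_def by (subst pel_append) simp

lemma pe_Cons2[simp]: "path_edges (a # b # xs) = insert {a, b} (path_edges (b # xs))"
  by (simp add: path_edges_def)
lemma pe_single[simp]: "path_edges [a] = {}"
  by (simp add: path_edges_def)
lemma pl_Cons2[simp]: "path_len w (a # b # xs) = w {a,b} + path_len w (b # xs)"
  by (simp add: path_len_def)
lemma pl_single[simp]: "path_len w [a] = 0"
  by (simp add: path_len_def)

lemma pe_char: "path_edges p = {{p!i, p!Suc i} | i. Suc i < length p}"
  unfolding path_edges_def path_edge_list_def by auto

lemma is_path_iff: "is_path V F p \<longleftrightarrow> p \<noteq> [] \<and> distinct p \<and> set p \<subseteq> V \<and> path_edges p \<subseteq> F"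
  unfolding is_path_def pe_char by blast

lemma pe_rev: "path_edges (rev p) = path_edges p"
proof (induction p)
  case Nil then show ?case by simp
next
  case (Cons a p)
  show ?case
  proof (cases p)
    case Nil then show ?thesis by simp
  next
    case (Cons b q)
    have "rev (a # p) = rev q @ b # [a]" using Cons by simp
    then have "path_edges (rev (a # p)) = path_edges (rev q @ [b]) \<union> path_edges [b, a]"
      using pe_append by metis
    also have "rev q @ [b] = rev p" using Cons by simp
    finally show ?thesis using Cons.IH Cons by (auto simp: insert_commute)
  qed
qed

lemma pe_endpoints: "e \<in> path_edges p \<Longrightarrow> u \<in> e \<Longrightarrow> u \<in> set p"
  unfolding pe_char by auto

lemma pl_nonneg: "path_edges p \<subseteq> E \<Longrightarrow> \<forall>e\<in>E. w e > 0 \<Longrightarrow> 0 \<le> path_len w p"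
  unfolding path_len_def path_edges_def
  by (rule sum_list_nonneg) (auto intro: less_imp_le)

lemma pl_pos: "path_edges (a # b # xs) \<subseteq> E \<Longrightarrow> \<forall>e\<in>E. w e > 0 \<Longrightarrow> 0 < path_len w (a # b # xs)"
proof -
  assume h: "path_edges (a # b # xs) \<subseteq> E" "\<forall>e\<in>E. w e > 0"
  then have "0 \<le> path_len w (b # xs)" by (intro pl_nonneg[of _ E]) auto
  moreover have "w {a,b} > 0" using h by auto
  ultimately show ?thesis by simp
qed

lemma path_rev: "path_between V F u v p \<Longrightarrow> path_between V F v u (rev p)"
  unfolding path_between_def is_path_iff by (simp add: pe_rev hd_rev last_rev)

lemma path_mono: "path_between V F u v p \<Longrightarrow> F \<subseteq> F' \<Longrightarrow> path_between V F' u v p"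
  unfolding path_between_def is_path_iff by auto

lemma path_trans:
  assumes "path_between V F x y p" "path_between V F y z q"
  shows "\<exists>r. path_between V F x z r"
proof -
  have pp: "p \<noteq> []" "distinct p" "set p \<subseteq> V" "path_edges p \<subseteq> F" "hd p = x" "last p = y"
    using assms(1) unfolding path_between_def is_path_iff by auto
  have qq: "q \<noteq> []" "distinct q" "set q \<subseteq> V" "path_edges q \<subseteq> F" "hd q = y" "last q = z"
    using assms(2) unfolding path_between_def is_path_iff by auto
  have "y \<in> set p" "y \<in> set q" using pp(1,6) qq(1,5) hd_in_set last_in_set by metis+
  then have "\<exists>u\<in>set p. u \<in> set q" by blast
  from split_list_first_prop[OF this] obtain A u B where p: "p = A @ u # B" "u \<in> set q" "\<forall>a\<in>set A. a \<notin> set q"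
    by blast
  from split_list[OF p(2)] obtain C D where q: "q = C @ u # D" by blast
  let ?r = "A @ u # D"
  have "distinct ?r" using pp(2) qq(2) p q by auto
  moreover have "set ?r \<subseteq> V" using pp(3) qq(3) p q by auto
  moreover have "path_edges ?r \<subseteq> F"
  proof -
    have "path_edges (A @ [u]) \<subseteq> F" using pp(4) unfolding p(1) pe_append[of A u B] by blast
    moreover have "path_edges (u # D) \<subseteq> F" using qq(4) unfolding q pe_append[of C u D] by blast
    ultimately show ?thesis unfolding pe_append[of A u D] by blast
  qed
  moreover have "hd ?r = x" using pp(5) p(1) by (cases A) auto
  moreover have "last ?r = z" using qq(6) q by simp
  ultimately have "path_between V F x z ?r" unfolding path_between_def is_path_iff by simp
  then show ?thesis by blast
qed



lemma seg:
  assumes trans: "\<And>a b c. conn a b \<Longrightarrow> conn b c \<Longrightarrow> conn a c"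
  shows "distinct p \<Longrightarrow> p \<noteq> [] \<Longrightarrow> last p \<in> Dv \<Longrightarrow>
    (\<And>c d. {c,d} \<in> path_edges p \<Longrightarrow> c \<noteq> d \<Longrightarrow> {c,d} \<notin> Dd \<Longrightarrow> conn c d) \<Longrightarrow>
    (\<And>c d. {c,d} \<in> path_edges p \<Longrightarrow> {c,d} \<in> Dd \<Longrightarrow> c \<in> Dv \<and> d \<in> Dv) \<Longrightarrow>
    (hd p \<in> Dv \<and> \<not> path_edges p \<subseteq> Dd) \<or> (\<exists>a\<in>Dv. a \<notin> set p \<and> conn a (hd p)) \<Longrightarrow>
    \<exists>x y. x \<in> Dv \<and> y \<in> Dv \<and> x \<noteq> y \<and> conn x y"
proof (induction p)
  case Nil then show ?case by simp
next
  case (Cons c rest)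
  show ?case
  proof (cases rest)
    case Nil
    then show ?thesis using Cons.prems by auto
  next
    case (Cons d rest')
    have cd: "c \<noteq> d" using Cons Cons.prems(1) by auto
    have e: "{c,d} \<in> path_edges (c # rest)" using Cons by simp
    have pe: "path_edges (c # rest) = insert {c,d} (path_edges rest)" using Cons by simp
    have IHp: "distinct rest" "rest \<noteq> []" "last rest \<in> Dv"
      "\<And>c d. {c,d} \<in> path_edges rest \<Longrightarrow> c \<noteq> d \<Longrightarrow> {c,d} \<notin> Dd \<Longrightarrow> conn c d"
      "\<And>c d. {c,d} \<in> path_edges rest \<Longrightarrow> {c,d} \<in> Dd \<Longrightarrow> c \<in> Dv \<and> d \<in> Dv"
      using Cons.prems Cons pe by auto
    note IH = Cons.IH[OF IHp]
    have hdr: "hd rest = d" using Cons by simp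
    show ?thesis
    proof (cases "{c,d} \<in> Dd")
      case True
      then have cdD: "c \<in> Dv" "d \<in> Dv" using Cons.prems(5)[OF e] by auto
      from Cons.prems(6) show ?thesis
      proof
        assume h: "hd (c # rest) \<in> Dv \<and> \<not> path_edges (c # rest) \<subseteq> Dd"
        then have "\<not> path_edges rest \<subseteq> Dd" using pe True by auto
        then show ?thesis using IH cdD hdr by blast
      next
        assume "\<exists>a\<in>Dv. a \<notin> set (c # rest) \<and> conn a (hd (c # rest))"
        then obtain a where "a \<in> Dv" "a \<noteq> c" "conn a c" by auto
        then show ?thesis using cdD by blast
      qed
    next
      case False
      then have ccd: "conn c d" using Cons.prems(4)[OF e cd] by auto
      from Cons.prems(6) show ?thesis
      proof
        assume h: "hd (c # rest) \<in> Dv \<and> \<not> path_edges (c # rest) \<subseteq> Dd"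
        have "c \<notin> set rest" using Cons.prems(1) by simp
        then show ?thesis using IH h ccd hdr by auto
      next
        assume "\<exists>a\<in>Dv. a \<notin> set (c # rest) \<and> conn a (hd (c # rest))"
        then obtain a where "a \<in> Dv" "a \<notin> set rest" "conn a c" by auto
        then show ?thesis using IH ccd hdr trans by blast
      qed
    qed
  qed
qed



lemma sp_in_D:
  assumes pos: "\<forall>e\<in>E. w e > 0"
  and sp: "shortest_path V E w s v p" and sq: "shortest_path V E w s t q" and v: "v \<in> set q"
  shows "path_edges p \<subseteq> D_edges V E w s t"
proof -
  have pp: "p \<noteq> []" "distinct p" "set p \<subseteq> V" "path_edges p \<subseteq> E" "hd p = s" "last p = v"
    using sp unfolding shortest_path_def path_between_def is_path_iff by auto
  have pmin: "\<And>r. path_between V E s v r \<Longrightarrow> path_len w p \<le> path_len w r"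
    using sp unfolding shortest_path_def by auto
  have qq: "q \<noteq> []" "distinct q" "set q \<subseteq> V" "path_edges q \<subseteq> E" "hd q = s" "last q = t"
    using sq unfolding shortest_path_def path_between_def is_path_iff by auto
  have qmin: "\<And>r. path_between V E s t r \<Longrightarrow> path_len w q \<le> path_len w r"
    using sq unfolding shortest_path_def by auto
  from split_list[OF v] obtain a b where q: "q = a @ v # b" by blast
  obtain p' where p': "p = p' @ [v]" using pp(1,6) append_butlast_last_id by metis
  have eq: "path_edges q = path_edges (a @ [v]) \<union> path_edges (v # b)"
    unfolding q by (rule pe_append)
  have lq: "path_len w q = path_len w (a @ [v]) + path_len w (v # b)"
    unfolding q by (rule pl_append)
  have vb: "v \<notin> set b" using qq(2) q by simp
  have "path_between V E s v (a @ [v])"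
    unfolding path_between_def is_path_iff
    using qq q eq by (cases a) auto
  then have lp: "path_len w p \<le> path_len w (a @ [v])" by (rule pmin)
  have disj: "set p \<inter> set b = {}"
  proof (rule ccontr)
    assume "set p \<inter> set b \<noteq> {}"
    then have "\<exists>x\<in>set p. x \<in> set b" by blast
    from split_list_first_prop[OF this] obtain p1 x p2 where
      p1: "p = p1 @ x # p2" "x \<in> set b" "\<forall>y\<in>set p1. y \<notin> set b" by blast
    from split_list[OF p1(2)] obtain b1 b2 where b: "b = b1 @ x # b2" by blast
    let ?r = "p1 @ x # b2"
    have ep: "path_edges p = path_edges (p1 @ [x]) \<union> path_edges (x # p2)"
      unfolding p1(1) by (rule pe_append)
    have lp2: "path_len w p = path_len w (p1 @ [x]) + path_len w (x # p2)"
      unfolding p1(1) by (rule pl_append)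
    have vb': "v # b = (v # b1) @ x # b2" using b by simp
    have evb: "path_edges (v # b) = path_edges ((v # b1) @ [x]) \<union> path_edges (x # b2)"
      unfolding vb' by (rule pe_append)
    have lvb: "path_len w (v # b) = path_len w ((v # b1) @ [x]) + path_len w (x # b2)"
      unfolding vb' by (rule pl_append)
    have er: "path_edges ?r = path_edges (p1 @ [x]) \<union> path_edges (x # b2)"
      by (rule pe_append)
    have lr: "path_len w ?r = path_len w (p1 @ [x]) + path_len w (x # b2)"
      by (rule pl_append)
    have dr: "distinct ?r" using pp(2) qq(2) p1 q b by auto
    have "set ?r \<subseteq> V" using pp(3) qq(3) p1 q b by auto
    moreover have "path_edges ?r \<subseteq> E" using er ep evb eq pp(4) qq(4) by blast
    moreover have "hd ?r = s" using pp(5) p1(1) by (cases p1) auto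
    moreover have "last ?r = t" using qq(6) q b by simp
    ultimately have "path_between V E s t ?r" using dr unfolding path_between_def is_path_iff by simp
    then have l1: "path_len w q \<le> path_len w ?r" by (rule qmin)
    have "p2 \<noteq> []"
    proof
      assume "p2 = []"
      then have "x = v" using pp(6) p1(1) by simp
      then show False using vb p1(2) by simp
    qed
    then obtain y p2' where p2: "p2 = y # p2'" by (cases p2) auto
    have "0 < path_len w (x # p2)" unfolding p2
      by (rule pl_pos[OF _ pos]) (use ep pp(4) p2 in blast)
    moreover have "0 \<le> path_len w ((v # b1) @ [x])"
      by (rule pl_nonneg[OF _ pos]) (use evb eq qq(4) in blast)
    ultimately show False using l1 lr lp2 lvb lq lp by linarith
  qed
  let ?r = "p' @ v # b"
  have er: "path_edges ?r = path_edges p \<union> path_edges (v # b)"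
    using pe_append[of p' v b] p' by simp
  have lr: "path_len w ?r = path_len w p + path_len w (v # b)"
    using pl_append[of w p' v b] p' by simp
  have dr: "distinct ?r" using pp(2) qq(2) q p' disj by auto
  have "set ?r \<subseteq> V" using pp(3) qq(3) q p' by auto
  moreover have "path_edges ?r \<subseteq> E" using er eq pp(4) qq(4) by blast
  moreover have "hd ?r = s" using pp(5) p' by (cases p') auto
  moreover have "last ?r = t" using qq(6) q by (cases b) auto
  ultimately have pr: "path_between V E s t ?r" using dr unfolding path_between_def is_path_iff by simp
  have "shortest_path V E w s t ?r"
    unfolding shortest_path_def using pr qmin lr lq lp by fastforce
  then show ?thesis using er unfolding D_edges_def by blast
qed



theorem lemma12:
  fixes V :: "'a set" and E :: "'a set set" and w :: "'a set \<Rightarrow> real" and s t :: 'a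
    and T :: "'a set set" and P :: "'a list"
  assumes "simple_graph V E"
    and "connected_graph V E"
    and "\<forall>e\<in>E. w e > 0"
    and "s \<in> V" and "t \<in> V"
    and "shortest_path_tree V E w s T"
    and "optimal_outward_path V E w s t P"
  shows "path_edges P \<inter> E_tilde V E w s t T \<noteq> {}"
proof
  assume noE: "path_edges P \<inter> E_tilde V E w s t T = {}"
  define D where "D = D_edges V E w s t"
  define R where "R = forest_R V E w s t T"
  define Dv where "Dv = {v. \<exists>q. shortest_path V E w s t q \<and> v \<in> set q}"
  define conn where "conn = (\<lambda>x y. \<exists>q. path_between V R x y q)"
  have pos: "\<forall>e\<in>E. w e > 0" by fact
  have sg: "\<And>e. e \<in> E \<Longrightarrow> \<exists>x y. x \<noteq> y \<and> x \<in> V \<and> y \<in> V \<and> e = {x, y}"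
    using assms(1) unfolding simple_graph_def by blast
  have TE: "T \<subseteq> E" using assms(6) unfolding shortest_path_tree_def spanning_tree_def by blast
  have span: "\<And>u v. u \<in> V \<Longrightarrow> v \<in> V \<Longrightarrow> \<exists>!p. path_between V T u v p"
    using assms(6) unfolding shortest_path_tree_def spanning_tree_def by blast
  have uniq: "\<And>u v p1 p2. u \<in> V \<Longrightarrow> v \<in> V \<Longrightarrow> path_between V T u v p1 \<Longrightarrow> path_between V T u v p2 \<Longrightarrow> p1 = p2"
    using span by blast
  have tsp: "\<And>v p. v \<in> V \<Longrightarrow> path_between V T s v p \<Longrightarrow> shortest_path V E w s v p"
    using assms(6) unfolding shortest_path_tree_def by blast
  have RTD: "R = T - D" unfolding R_def D_def forest_R_def by blast
  have Dv_V: "\<And>v. v \<in> Dv \<Longrightarrow> v \<in> V"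
  proof -
    fix v assume "v \<in> Dv"
    then obtain q where "shortest_path V E w s t q" "v \<in> set q" unfolding Dv_def by blast
    then show "v \<in> V" unfolding shortest_path_def path_between_def is_path_iff by blast
  qed
  obtain pst where pst: "path_between V T s t pst" using span assms(4,5) by blast
  have spst: "shortest_path V E w s t pst" using tsp[OF assms(5) pst] .
  have pstp: "pst \<noteq> []" "hd pst = s" "last pst = t"
    using pst unfolding path_between_def is_path_iff by auto
  have "s \<in> set pst" "t \<in> set pst" using pstp hd_in_set last_in_set by metis+
  then have sDv: "s \<in> Dv" and tDv: "t \<in> Dv" using spst unfolding Dv_def by blast+
  have treeD: "\<And>v p. v \<in> Dv \<Longrightarrow> path_between V T s v p \<Longrightarrow> path_edges p \<subseteq> D"
  proof -
    fix v p assume v: "v \<in> Dv" and p: "path_between V T s v p"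
    from v obtain q where q: "shortest_path V E w s t q" "v \<in> set q" unfolding Dv_def by blast
    have "shortest_path V E w s v p" using tsp[OF Dv_V[OF v] p] .
    from sp_in_D[OF pos this q] show "path_edges p \<subseteq> D" unfolding D_def .
  qed
  have K1: "\<And>x y Q Px. x \<in> Dv \<Longrightarrow> y \<in> Dv \<Longrightarrow> path_between V R x y Q \<Longrightarrow> path_between V T s x Px \<Longrightarrow> y \<in> set Px"
  proof (rule ccontr)
    fix x y Q Px assume x: "x \<in> Dv" and y: "y \<in> Dv" and Q: "path_between V R x y Q"
      and Px: "path_between V T s x Px" and ny: "y \<notin> set Px"
    have qq: "Q \<noteq> []" "distinct Q" "set Q \<subseteq> V" "path_edges Q \<subseteq> R" "hd Q = x" "last Q = y"
      using Q unfolding path_between_def is_path_iff by auto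
    have pp: "Px \<noteq> []" "distinct Px" "set Px \<subseteq> V" "path_edges Px \<subseteq> T" "hd Px = s" "last Px = x"
      using Px unfolding path_between_def is_path_iff by auto
    obtain Py where Py: "path_between V T s y Py" using span assms(4) Dv_V[OF y] by blast
    have PyD: "path_edges Py \<subseteq> D" using treeD[OF y Py] .
    have "x \<in> set Q" "x \<in> set Px" using qq(1,5) pp(1,6) hd_in_set last_in_set by metis+
    then have "\<exists>u\<in>set Q. u \<in> set Px" by blast
    from split_list_last_prop[OF this] obtain Q1 z Q2 where
      Qs: "Q = Q1 @ z # Q2" "z \<in> set Px" "\<forall>u\<in>set Q2. u \<notin> set Px" by blast
    from split_list[OF Qs(2)] obtain A B where Ps: "Px = A @ z # B" by blast
    let ?r = "A @ z # Q2"
    have eQ: "path_edges Q = path_edges (Q1 @ [z]) \<union> path_edges (z # Q2)"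
      unfolding Qs(1) by (rule pe_append)
    have eP: "path_edges Px = path_edges (A @ [z]) \<union> path_edges (z # B)"
      unfolding Ps by (rule pe_append)
    have er: "path_edges ?r = path_edges (A @ [z]) \<union> path_edges (z # Q2)" by (rule pe_append)
    have Q2ne: "Q2 \<noteq> []"
    proof
      assume "Q2 = []"
      then have "last Q = z" using Qs(1) by simp
      then show False using qq(6) ny Qs(2) by simp
    qed
    have dr: "distinct ?r" using pp(2) qq(2) Qs Ps by auto
    have "set ?r \<subseteq> V" using pp(3) qq(3) Qs Ps by auto
    moreover have "path_edges ?r \<subseteq> T" using er eQ eP pp(4) qq(4) RTD by blast
    moreover have "hd ?r = s" using pp(5) Ps by (cases A) auto
    moreover have "last ?r = y" using qq(6) Qs(1) Q2ne by simp
    ultimately have "path_between V T s y ?r" using dr unfolding path_between_def is_path_iff by simp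
    then have rPy: "?r = Py" using uniq[OF assms(4) Dv_V[OF y] _ Py] by blast
    obtain b Q2' where Q2: "Q2 = b # Q2'" using Q2ne by (cases Q2) auto
    have "{z, b} \<in> R" using eQ qq(4) Q2 by auto
    moreover have "{z, b} \<in> D" using er rPy PyD Q2 by auto
    ultimately show False using RTD by blast
  qed
  have K: "\<And>x y. x \<in> Dv \<Longrightarrow> y \<in> Dv \<Longrightarrow> x \<noteq> y \<Longrightarrow> \<not> conn x y"
  proof
    fix x y assume x: "x \<in> Dv" and y: "y \<in> Dv" and xy: "x \<noteq> y" and "conn x y"
    then obtain Q where Q: "path_between V R x y Q" unfolding conn_def by blast
    obtain Px where Px: "path_between V T s x Px" using span assms(4) Dv_V[OF x] by blast
    obtain Py where Py: "path_between V T s y Py" using span assms(4) Dv_V[OF y] by blast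
    have yPx: "y \<in> set Px" using K1[OF x y Q Px] .
    have xPy: "x \<in> set Py" using K1[OF y x path_rev[OF Q] Py] .
    have pp: "Px \<noteq> []" "distinct Px" "set Px \<subseteq> V" "path_edges Px \<subseteq> T" "hd Px = s" "last Px = x"
      using Px unfolding path_between_def is_path_iff by auto
    from split_list[OF yPx] obtain A B where Ps: "Px = A @ y # B" by blast
    have eP: "path_edges Px = path_edges (A @ [y]) \<union> path_edges (y # B)"
      unfolding Ps by (rule pe_append)
    have "distinct (A @ [y])" using pp(2) Ps by auto
    moreover have "set (A @ [y]) \<subseteq> V" using pp(3) Ps by auto
    moreover have "path_edges (A @ [y]) \<subseteq> T" using eP pp(4) by blast
    moreover have "hd (A @ [y]) = s" using pp(5) Ps by (cases A) auto
    ultimately have "path_between V T s y (A @ [y])" unfolding path_between_def is_path_iff by simp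
    then have "A @ [y] = Py" using uniq[OF assms(4) Dv_V[OF y] _ Py] by blast
    then have xA: "x \<in> set A" using xPy xy by auto
    show False
    proof (cases B)
      case Nil then show ?thesis using pp(6) Ps xy by simp
    next
      case (Cons b B')
      then have "x \<in> set B" using pp(6) Ps by (metis last.simps last_appendR last_in_set list.distinct(1))
      then show ?thesis using xA pp(2) Ps by auto
    qed
  qed
  have Pp: "path_between V E s t P" "path_edges P \<inter> (E - D) \<noteq> {}"
    using assms(7) unfolding optimal_outward_path_def outward_path_def D_def by auto
  have pp: "P \<noteq> []" "distinct P" "set P \<subseteq> V" "path_edges P \<subseteq> E" "hd P = s" "last P = t"
    using Pp(1) unfolding path_between_def is_path_iff by auto
  have trans: "\<And>a b c. conn a b \<Longrightarrow> conn b c \<Longrightarrow> conn a c"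
    unfolding conn_def using path_trans by metis
  have h1: "\<And>c d. {c,d} \<in> path_edges P \<Longrightarrow> c \<noteq> d \<Longrightarrow> {c,d} \<notin> D \<Longrightarrow> conn c d"
  proof -
    fix c d assume e: "{c,d} \<in> path_edges P" and cd: "c \<noteq> d" and nD: "{c,d} \<notin> D"
    have eE: "{c,d} \<in> E" using e pp(4) by blast
    obtain x y where xy: "x \<in> V" "y \<in> V" "{c,d} = {x,y}" using sg[OF eE] by blast
    have "c \<in> {c,d}" "d \<in> {c,d}" by auto
    then have cdV: "c \<in> V" "d \<in> V" using xy by auto
    show "conn c d"
    proof (cases "{c,d} \<in> T")
      case True
      then have "{c,d} \<in> R" using RTD nD by blast
      then have "path_between V R c d [c,d]"
        unfolding path_between_def is_path_iff using cd cdV by simp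
      then show ?thesis unfolding conn_def by blast
    next
      case False
      then have "{c,d} \<notin> E_tilde V E w s t T" using noE e by blast
      then show ?thesis using eE False nD
        unfolding E_tilde_def conn_def R_def D_def by blast
    qed
  qed
  have h2: "\<And>c d. {c,d} \<in> path_edges P \<Longrightarrow> {c,d} \<in> D \<Longrightarrow> c \<in> Dv \<and> d \<in> Dv"
  proof -
    fix c d assume "{c,d} \<in> D"
    then obtain q where "shortest_path V E w s t q" "{c,d} \<in> path_edges q"
      unfolding D_def D_edges_def by blast
    moreover have "c \<in> {c,d}" "d \<in> {c,d}" by auto
    ultimately have "c \<in> set q" "d \<in> set q" using pe_endpoints by metis+
    then show "c \<in> Dv \<and> d \<in> Dv" unfolding Dv_def using \<open>shortest_path V E w s t q\<close> by blast
  qed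
  have "(hd P \<in> Dv \<and> \<not> path_edges P \<subseteq> D) \<or> (\<exists>a\<in>Dv. a \<notin> set P \<and> conn a (hd P))"
  proof -
    have "\<not> path_edges P \<subseteq> D" using Pp(2) by blast
    then show ?thesis using pp(5) sDv by simp
  qed
  note disj = this
  have lDv: "last P \<in> Dv" using pp(6) tDv by simp
  have "\<exists>x y. x \<in> Dv \<and> y \<in> Dv \<and> x \<noteq> y \<and> conn x y"
    apply (rule seg[where conn=conn and p=P and Dv=Dv and Dd=D])
    subgoal for a b c by (rule trans)
    subgoal by (rule pp(2))
    subgoal by (rule pp(1))
    subgoal by (rule lDv)
    subgoal for c d by (rule h1)
    subgoal for c d by (rule h2)
    subgoal by (rule disj)
    done
  then obtain x y where "x \<in> Dv" "y \<in> Dv" "x \<noteq> y" "conn x y" by blast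
  then show False using K by blast
qed

end
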